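(* Let $g:\mathbb{R}^n\times\Xi\to\mathbb{R}^n$ be an arbitrary (stochastic gradient) map and let $\xi^{(1)},\xi^{(2)},\dots\in\Xi$ be a fixed sequence of samples. Fix $\mu\in[0,1)$ and constant learning rates $\gamma_{\mathrm{primal}},\gamma_{\mathrm{modern}}>0$ with $(1-\mu)\gamma_{\mathrm{primal}}=\gamma_{\mathrm{modern}}$. Define the primal averaging sequences by $z_{\mathrm{primal}}^{(1)}=x_{\mathrm{primal}}^{(1)}$ and, for $t\ge 1$, $$y_{\mathrm{primal}}^{(t)}=\mu x_{\mathrm{primal}}^{(t)}+(1-\mu)z_{\mathrm{primal}}^{(t)},\quad z_{\mathrm{primal}}^{(t+1)}=z_{\mathrm{primal}}^{(t)}-\gamma_{\mathrm{primal}}\, g(y_{\mathrm{primal}}^{(t)};\xi^{(t)}),\quad x_{\mathrm{primal}}^{(t+1)}=\mu x_{\mathrm{primal}}^{(t)}+(1-\mu)z_{\mathrm{primal}}^{(t+1)},$$ and the modern Nesterov sequences by $x_{\mathrm{modern}}^{(1)}=x_{\mathrm{primal}}^{(1)}$, $b_{\mathrm{modern}}^{(0)}=0$ and, for $t\ge1$, $$b_{\mathrm{modern}}^{(t)}=\mu b_{\mathrm{modern}}^{(t-1)}+g(x_{\mathrm{modern}}^{(t)};\xi^{(t)}),\qquad x_{\mathrm{modern}}^{(t+1)}=x_{\mathrm{modern}}^{(t)}-\gamma_{\mathrm{modern}}\big[\mu b_{\mathrm{modern}}^{(t)}+g(x_{\mathrm{modern}}^{(t)};\xi^{(t)})\big].$$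 Then for every $t\ge 1$, $$y_{\mathrm{primal}}^{(t)}=x_{\mathrm{modern}}^{(t)}\qquad\text{and}\qquad b_{\mathrm{modern}}^{(t)}=\frac{1}{(1-\mu)\gamma_{\mathrm{primal}}}\big(x_{\mathrm{primal}}^{(t)}-x_{\mathrm{primal}}^{(t+1)}\big).$$
   Context: The first recursion is the "primal averaging formulation" of Nesterov's method and the second is the "modern formulation" (as implemented in PyTorch/JAX). Both are driven by the same sample sequence $\xi^{(t)}$ and started from the same initial point. *)

theory Defs
  imports "HOL-Analysis.Analysis"
begin

end

theory Submission
  imports Defs
begin

theorem proposition1:
  fixes g :: "real ^ 'n \<Rightarrow> 'xi \<Rightarrow> real ^ 'n"
    and xi :: "nat \<Rightarrow> 'xi"
    and mu gp gm :: real
    and xp zp yp xm bm :: "nat \<Rightarrow> real ^ 'n"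
  assumes mu: "0 \<le> mu" "mu < 1"
    and gp: "gp > 0" and gm: "gm > 0"
    and lr: "(1 - mu) * gp = gm"
    and zp1: "zp 1 = xp 1"
    and yp: "\<And>t. t \<ge> 1 \<Longrightarrow> yp t = mu *\<^sub>R xp t + (1 - mu) *\<^sub>R zp t"
    and zp: "\<And>t. t \<ge> 1 \<Longrightarrow> zp (t + 1) = zp t - gp *\<^sub>R g (yp t) (xi t)"
    and xp: "\<And>t. t \<ge> 1 \<Longrightarrow> xp (t + 1) = mu *\<^sub>R xp t + (1 - mu) *\<^sub>R zp (t + 1)"
    and xm1: "xm 1 = xp 1"
    and bm0: "bm 0 = 0"
    and bm: "\<And>t. t \<ge> 1 \<Longrightarrow> bm t = mu *\<^sub>R bm (t - 1) + g (xm t) (xi t)"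
    and xm: "\<And>t. t \<ge> 1 \<Longrightarrow> xm (t + 1) = xm t - gm *\<^sub>R (mu *\<^sub>R bm t + g (xm t) (xi t))"
  shows "\<forall>t\<ge>1. yp t = xm t \<and> bm t = (1 / ((1 - mu) * gp)) *\<^sub>R (xp t - xp (t + 1))"
proof -
  have c: "1 - mu \<noteq> 0" "gp \<noteq> 0" using mu gp by auto
  have P: "yp t = xm t \<and> gp *\<^sub>R mu *\<^sub>R bm (t - 1) = xp t - zp t" if "t \<ge> 1" for t
    using that
  proof (induction t rule: dec_induct)
    case base
    show ?case using yp[of 1] zp1 xm1 bm0 by (simp add: algebra_simps)
  next
    case (step t)
    have t1: "t \<ge> 1" by fact
    have IH1: "yp t = xm t" and IH2: "gp *\<^sub>R mu *\<^sub>R bm (t - 1) = xp t - zp t" using step.IH by auto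
    have e1: "yp t = mu *\<^sub>R xp t + (1 - mu) *\<^sub>R zp t" using yp[OF t1] .
    have e2: "zp (t + 1) = zp t - gp *\<^sub>R g (xm t) (xi t)" using zp[OF t1] IH1 by simp
    have e3: "xp (t + 1) = mu *\<^sub>R xp t + (1 - mu) *\<^sub>R zp (t + 1)" using xp[OF t1] .
    have e4: "bm t = mu *\<^sub>R bm (t - 1) + g (xm t) (xi t)" using bm[OF t1] .
    have e5: "xm (t + 1) = xm t - gm *\<^sub>R (mu *\<^sub>R bm t + g (xm t) (xi t))" using xm[OF t1] .
    have e6: "yp (t + 1) = mu *\<^sub>R xp (t+1) + (1 - mu) *\<^sub>R zp (t+1)" using yp[of "t+1"] by simp
    show ?case
    proof
      show "yp (Suc t) = xm (Suc t)"
        unfolding Suc_eq_plus1 vec_eq_iff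
      proof
        fix i
        have a1: "yp t $ i = mu * xp t $ i + (1 - mu) * zp t $ i" using e1 by simp
        have a2: "zp (t + 1) $ i = zp t $ i - gp * g (xm t) (xi t) $ i" using e2 by simp
        have a3: "xp (t + 1) $ i = mu * xp t $ i + (1 - mu) * zp (t + 1) $ i" using e3 by simp
        have a4: "bm t $ i = mu * bm (t - 1) $ i + g (xm t) (xi t) $ i" using e4 by simp
        have a5: "xm (t + 1) $ i = xm t $ i - gm * (mu * bm t $ i + g (xm t) (xi t) $ i)" using e5 by simp
        have a6: "yp (t + 1) $ i = mu * xp (t+1) $ i + (1 - mu) * zp (t+1) $ i" using e6 by simp
        have a7: "gp * (mu * bm (t - 1) $ i) = xp t $ i - zp t $ i" using arg_cong[OF IH2, of "\<lambda>v. v $ i"] by simp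
        have a8: "xm t $ i = mu * xp t $ i + (1 - mu) * zp t $ i" using IH1 a1 by simp
        have a9: "xp t $ i = zp t $ i + gp * (mu * bm (t - 1) $ i)" using a7 by simp
        show "yp (t + 1) $ i = xm (t + 1) $ i"
          unfolding a6 a5 a3 a2 a8 a4 a9 lr[symmetric] by (simp add: algebra_simps)
      qed
      show "gp *\<^sub>R mu *\<^sub>R bm (Suc t - 1) = xp (Suc t) - zp (Suc t)"
        unfolding vec_eq_iff
      proof
        fix i
        have a2: "zp (t + 1) $ i = zp t $ i - gp * g (xm t) (xi t) $ i" using e2 by simp
        have a3: "xp (t + 1) $ i = mu * xp t $ i + (1 - mu) * zp (t + 1) $ i" using e3 by simp
        have a4: "bm t $ i = mu * bm (t - 1) $ i + g (xm t) (xi t) $ i" using e4 by simp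
        have a7: "gp * (mu * bm (t - 1) $ i) = xp t $ i - zp t $ i" using arg_cong[OF IH2, of "\<lambda>v. v $ i"] by simp
        have a9: "xp t $ i = zp t $ i + gp * (mu * bm (t - 1) $ i)" using a7 by simp
        show "(gp *\<^sub>R mu *\<^sub>R bm (Suc t - 1)) $ i = (xp (Suc t) - zp (Suc t)) $ i"
          unfolding Suc_eq_plus1 vector_scaleR_component vector_minus_component diff_add_cancel a3 a2 a4 a9
          by (simp add: algebra_simps a4)
      qed
    qed
  qed
  show ?thesis
  proof (intro allI impI conjI)
    fix t :: nat assume t1: "t \<ge> 1"
    show "yp t = xm t" using P[OF t1] by simp
    have IH2: "gp *\<^sub>R mu *\<^sub>R bm (t - 1) = xp t - zp t" using P[OF t1] by simp
    have IH1: "yp t = xm t" using P[OF t1] by simp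
    have e2: "zp (t + 1) = zp t - gp *\<^sub>R g (xm t) (xi t)" using zp[OF t1] IH1 by simp
    have e3: "xp (t + 1) = mu *\<^sub>R xp t + (1 - mu) *\<^sub>R zp (t + 1)" using xp[OF t1] .
    have e4: "bm t = mu *\<^sub>R bm (t - 1) + g (xm t) (xi t)" using bm[OF t1] .
    show "bm t = (1 / ((1 - mu) * gp)) *\<^sub>R (xp t - xp (t + 1))"
      unfolding vec_eq_iff
    proof
      fix i
      have a2: "zp (t + 1) $ i = zp t $ i - gp * g (xm t) (xi t) $ i" using e2 by simp
      have a3: "xp (t + 1) $ i = mu * xp t $ i + (1 - mu) * zp (t + 1) $ i" using e3 by simp
      have a4: "bm t $ i = mu * bm (t - 1) $ i + g (xm t) (xi t) $ i" using e4 by simp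
      have a7: "gp * (mu * bm (t - 1) $ i) = xp t $ i - zp t $ i" using arg_cong[OF IH2, of "\<lambda>v. v $ i"] by simp
      have a9: "xp t $ i = zp t $ i + gp * (mu * bm (t - 1) $ i)" using a7 by simp
      have "(1 - mu) * gp * bm t $ i = xp t $ i - xp (t + 1) $ i"
        unfolding a3 a2 a4 a9 by (simp add: algebra_simps)
      then have h: "(1 - mu) * gp * bm t $ i = (xp t - xp (t + 1)) $ i" by simp
      have cg: "(1 - mu) * gp \<noteq> 0" using c by simp
      have "bm t $ i = (1 / ((1 - mu) * gp)) * ((1 - mu) * gp * bm t $ i)"
        using cg by simp
      then show "bm t $ i = ((1 / ((1 - mu) * gp)) *\<^sub>R (xp t - xp (t + 1))) $ i"
        unfolding h by simp
    qed
  qed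
qed

end
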